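(* Let $n,p,K$ be positive integers with $K\ge 2$, and let $\boldsymbol{x}_1,\ldots,\boldsymbol{x}_n\in\mathbb{R}^p$ with $\boldsymbol{x}_i=(x_{i1},\ldots,x_{ip})^T$; set $x_{i0}=1$ for all $i$. A gating parameter is $\boldsymbol{w}=(w_{kj})_{1\le k\le K-1,\,0\le j\le p}$, where $w_{k0}\in\mathbb{R}$ and $\boldsymbol{w}_k=(w_{k1},\ldots,w_{kp})^T\in\mathbb{R}^p$. Define $$I_1(\boldsymbol{w}) = - \sum_{i=1}^n\log\Bigl[1+\sum_{k=1}^{K-1}e^{w_{k0}+\boldsymbol{x}_i^T \boldsymbol{w}_k}\Bigr].$$ Fix any $\boldsymbol{w}^{[s]}$, and set $C_i^{m} = 1+\sum_{k=1}^{K-1}e^{w_{k0}^{[s]}+\boldsymbol{x}_i^T \boldsymbol{w}_k^{[s]}}$ and $\pi_k(\boldsymbol{x}_i;\boldsymbol{w}^{[s]}) = e^{w_{k0}^{[s]}+\boldsymbol{x}_i^T \boldsymbol{w}_k^{[s]}}/C_i^m$. Define $$G_1(\boldsymbol{w}|\boldsymbol{w}^{[s]}) = \sum_{i=1}^n\Bigl[-\sum_{k=1}^{K-1}\frac{\pi_k(\boldsymbol{x}_i;\boldsymbol{w}^{[s]})}{p+1}\sum_{j=0}^p e^{(p+1)x_{ij}(w_{kj}-w_{kj}^{[s]})} - \log C_i^{m}+ 1- \frac{1}{C_i^{m}}\Bigr].$$ Then $I_1$ is a majorizer of $G_1(\cdot|\boldsymbol{w}^{[s]})$, i.e. $G_1(\cdot|\boldsymbol{w}^{[s]})$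 is a minorizing function of $I_1$ at $\boldsymbol{w}^{[s]}$: $I_1(\boldsymbol{w})\ge G_1(\boldsymbol{w}|\boldsymbol{w}^{[s]})$ for all $\boldsymbol{w}$, and $I_1(\boldsymbol{w}^{[s]}) = G_1(\boldsymbol{w}^{[s]}|\boldsymbol{w}^{[s]})$.
   Context: A function $G(x|x_m)$ is called a minorizing function of $F(x)$ at $x_m$ if $F(x)\ge G(x|x_m)$ for all $x$ and $F(x_m)=G(x_m|x_m)$. The function $I_1$ is the non-linear part of the expected complete-data log-likelihood of the softmax gating network $\pi_k(\boldsymbol{x};\boldsymbol{w})=\exp(w_{k0}+\boldsymbol{x}^T\boldsymbol{w}_k)/(1+\sum_{l=1}^{K-1}\exp(w_{l0}+\boldsymbol{x}^T\boldsymbol{w}_l))$ of a mixture-of-experts model with $K$ components. *)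

theory Defs
  imports "HOL-Analysis.Analysis"
begin

definition xaug :: "(nat \<Rightarrow> nat \<Rightarrow> real) \<Rightarrow> nat \<Rightarrow> nat \<Rightarrow> real" where
  "xaug x i j = (if j = 0 then 1 else x i j)"

definition lin :: "nat \<Rightarrow> (nat \<Rightarrow> nat \<Rightarrow> real) \<Rightarrow> (nat \<Rightarrow> nat \<Rightarrow> real) \<Rightarrow> nat \<Rightarrow> nat \<Rightarrow> real" where
  "lin p x w i k = w k 0 + (\<Sum>j=1..p. x i j * w k j)"

definition I1 :: "nat \<Rightarrow> nat \<Rightarrow> nat \<Rightarrow> (nat \<Rightarrow> nat \<Rightarrow> real) \<Rightarrow> (nat \<Rightarrow> nat \<Rightarrow> real) \<Rightarrow> real" where
  "I1 n p K x w = - (\<Sum>i=1..n. ln (1 + (\<Sum>k=1..K-1. exp (lin p x w i k))))"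

definition Cm :: "nat \<Rightarrow> nat \<Rightarrow> (nat \<Rightarrow> nat \<Rightarrow> real) \<Rightarrow> (nat \<Rightarrow> nat \<Rightarrow> real) \<Rightarrow> nat \<Rightarrow> real" where
  "Cm p K x ws i = 1 + (\<Sum>k=1..K-1. exp (lin p x ws i k))"

definition gate :: "nat \<Rightarrow> nat \<Rightarrow> (nat \<Rightarrow> nat \<Rightarrow> real) \<Rightarrow> (nat \<Rightarrow> nat \<Rightarrow> real) \<Rightarrow> nat \<Rightarrow> nat \<Rightarrow> real" where
  "gate p K x ws i k = exp (lin p x ws i k) / Cm p K x ws i"

definition G1 :: "nat \<Rightarrow> nat \<Rightarrow> nat \<Rightarrow> (nat \<Rightarrow> nat \<Rightarrow> real) \<Rightarrow> (nat \<Rightarrow> nat \<Rightarrow> real) \<Rightarrow> (nat \<Rightarrow> nat \<Rightarrow> real) \<Rightarrow> real" where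
  "G1 n p K x w ws = (\<Sum>i=1..n.
      - (\<Sum>k=1..K-1. gate p K x ws i k / real (p + 1) *
           (\<Sum>j=0..p. exp (real (p + 1) * xaug x i j * (w k j - ws k j))))
      - ln (Cm p K x ws i) + 1 - 1 / Cm p K x ws i)"

definition minorizes :: "('a \<Rightarrow> real) \<Rightarrow> ('a \<Rightarrow> real) \<Rightarrow> 'a \<Rightarrow> bool" where
  "minorizes G F xm \<longleftrightarrow> (\<forall>x. F x \<ge> G x) \<and> F xm = G xm"

end

theory Submission
  imports Defs
begin

lemma jensen_exp:
  fixes y :: "nat \<Rightarrow> real"
  shows "exp ((\<Sum>j=0..p. y j) / real (p+1)) \<le> (\<Sum>j=0..p. exp (y j)) / real (p+1)"
proof -
  have "exp (\<Sum>j\<in>{0..p}. (1/real (p+1)) *\<^sub>R y j) \<le> (\<Sum>j\<in>{0..p}. (1/real (p+1)) * exp (y j))"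
    by (rule convex_on_sum[OF _ _ exp_convex]) auto
  moreover have "(\<Sum>j\<in>{0..p}. (1/real (p+1)) *\<^sub>R y j) = (\<Sum>j=0..p. y j) / real (p+1)"
    by (simp add: sum_divide_distrib)
  moreover have "(\<Sum>j\<in>{0..p}. (1/real (p+1)) * exp (y j)) = (\<Sum>j=0..p. exp (y j)) / real (p+1)"
    by (simp add: sum_divide_distrib)
  ultimately show ?thesis by simp
qed

lemma lin_diff:
  "lin p x w i k - lin p x ws i k = (\<Sum>j=0..p. xaug x i j * (w k j - ws k j))"
proof -
  have "(\<Sum>j=0..p. xaug x i j * (w k j - ws k j)) = xaug x i 0 * (w k 0 - ws k 0) + (\<Sum>j=1..p. xaug x i j * (w k j - ws k j))"
    by (simp add: sum.atLeast_Suc_atMost)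
  also have "(\<Sum>j=1..p. xaug x i j * (w k j - ws k j)) = (\<Sum>j=1..p. x i j * w k j) - (\<Sum>j=1..p. x i j * ws k j)"
    by (simp add: xaug_def sum_subtractf[symmetric] algebra_simps)
  finally show ?thesis by (simp add: lin_def xaug_def)
qed

lemma exp_bound:
  "exp (lin p x w i k - lin p x ws i k) \<le>
     (\<Sum>j=0..p. exp (real (p + 1) * xaug x i j * (w k j - ws k j))) / real (p+1)"
proof -
  have "lin p x w i k - lin p x ws i k = (\<Sum>j=0..p. real (p + 1) * xaug x i j * (w k j - ws k j)) / real (p+1)"
    unfolding lin_diff by (simp add: sum_distrib_left[symmetric] mult.assoc del: of_nat_Suc)
  then show ?thesis using jensen_exp[of "\<lambda>j. real (p + 1) * xaug x i j * (w k j - ws k j)" p] by simp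
qed

lemma Cm_pos: "Cm p K x ws i > 0"
  unfolding Cm_def by (intro add_pos_nonneg) (auto intro: sum_nonneg)

lemma per_i:
  "- ln (1 + (\<Sum>k=1..K-1. exp (lin p x w i k))) \<ge>
      - (\<Sum>k=1..K-1. gate p K x ws i k / real (p + 1) *
           (\<Sum>j=0..p. exp (real (p + 1) * xaug x i j * (w k j - ws k j))))
      - ln (Cm p K x ws i) + 1 - 1 / Cm p K x ws i"
proof -
  define C where "C = Cm p K x ws i"
  define D where "D = 1 + (\<Sum>k=1..K-1. exp (lin p x w i k))"
  have C: "C > 0" using Cm_pos C_def by simp
  have D: "D > 0" unfolding D_def by (intro add_pos_nonneg) (auto intro: sum_nonneg)
  have "ln D - ln C \<le> (D - C) / C" by (rule ln_diff_le[OF D C])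
  hence 1: "- ln D \<ge> - ln C + 1 - D / C" using C by (simp add: diff_divide_distrib)
  have "D / C = 1 / C + (\<Sum>k=1..K-1. gate p K x ws i k * exp (lin p x w i k - lin p x ws i k))"
    unfolding D_def gate_def C_def[symmetric] using C
    by (simp add: add_divide_distrib sum_divide_distrib exp_diff)
  also have "\<dots> \<le> 1 / C + (\<Sum>k=1..K-1. gate p K x ws i k / real (p + 1) *
           (\<Sum>j=0..p. exp (real (p + 1) * xaug x i j * (w k j - ws k j))))"
  proof -
    have "gate p K x ws i k * exp (lin p x w i k - lin p x ws i k) \<le> gate p K x ws i k / real (p + 1) *
           (\<Sum>j=0..p. exp (real (p + 1) * xaug x i j * (w k j - ws k j)))" for k
    proof -
      have g: "gate p K x ws i k \<ge> 0" unfolding gate_def using C C_def by simp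
      show ?thesis using mult_left_mono[OF exp_bound[of p x w i k ws] g] by simp
    qed
    then show ?thesis by (intro add_left_mono sum_mono) auto
  qed
  finally show ?thesis using 1 unfolding D_def C_def by linarith
qed

lemma per_i_eq:
  "- ln (1 + (\<Sum>k=1..K-1. exp (lin p x ws i k))) =
      - (\<Sum>k=1..K-1. gate p K x ws i k / real (p + 1) *
           (\<Sum>j=0..p. exp (real (p + 1) * xaug x i j * (ws k j - ws k j))))
      - ln (Cm p K x ws i) + 1 - 1 / Cm p K x ws i"
proof -
  define C where "C = Cm p K x ws i"
  have C: "C > 0" using Cm_pos C_def by simp
  have "(\<Sum>k=1..K-1. gate p K x ws i k / real (p + 1) *
           (\<Sum>j=0..p. exp (real (p + 1) * xaug x i j * (ws k j - ws k j))))
        = (\<Sum>k=1..K-1. gate p K x ws i k)" by simp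
  also have "\<dots> = (C - 1) / C" unfolding gate_def C_def Cm_def
    by (simp add: sum_divide_distrib)
  finally have e: "(\<Sum>k=1..K-1. gate p K x ws i k / real (p + 1) *
           (\<Sum>j=0..p. exp (real (p + 1) * xaug x i j * (ws k j - ws k j)))) = (C - 1) / C" .
  have "(C - 1) / C = 1 - 1 / C" using C by (simp add: field_simps)
  then show ?thesis unfolding e C_def[symmetric] by (simp add: C_def Cm_def)
qed

theorem theorem1:
  fixes n p K :: nat and x :: "nat \<Rightarrow> nat \<Rightarrow> real" and ws :: "nat \<Rightarrow> nat \<Rightarrow> real"
  assumes "n \<ge> 1" and "p \<ge> 1" and "K \<ge> 2"
  shows "minorizes (\<lambda>w. G1 n p K x w ws) (I1 n p K x) ws"
  unfolding minorizes_def
proof (intro conjI allI)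
  fix w
  have "G1 n p K x w ws \<le> (\<Sum>i=1..n. - ln (1 + (\<Sum>k=1..K-1. exp (lin p x w i k))))"
    unfolding G1_def by (rule sum_mono, rule per_i)
  then show "G1 n p K x w ws \<le> I1 n p K x w" by (simp add: I1_def sum_negf)
next
  have "G1 n p K x ws ws = (\<Sum>i=1..n. - ln (1 + (\<Sum>k=1..K-1. exp (lin p x ws i k))))"
    unfolding G1_def by (rule sum.cong[OF refl], rule per_i_eq[symmetric])
  then show "I1 n p K x ws = G1 n p K x ws ws" by (simp add: I1_def sum_negf)
qed

end
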